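(* Let $\lambda\in(0,1)$ and consider the gauge action as an action of $\mathbb R$ on $\mathcal Q^\lambda$ by $t\mapsto\gamma_{e^{it}}$. The dense $*$-subalgebra of finite linear combinations of elements $\chi_{[a,b)}\delta_g\in\mathcal Q^\lambda$ consists of entire analytic elements for this action, and $\psi$ is a $\mathrm{KMS}_\beta$ state for this action with $\beta=\log(\lambda^{-1})$, i.e. $\psi(x\,\gamma_{i\beta}(y))=\psi(yx)$ for all $x,y$ in that subalgebra. Moreover $\psi$ is the unique KMS state for this action, for any value of $\beta$.
   Context: Fix $\lambda\in(0,1)$ and $\Gamma_\lambda=\{\sum_{k=-N}^{N}n_k\lambda^k:N\ge0,n_k\in\mathbb Z\}\subset\mathbb R$. Let $G_\lambda$ be the group of matrices $[\lambda^n:a]=\begin{pmatrix}\lambda^n&a\\0&1\end{pmatrix}$ ($n\in\mathbb Z$, $a\in\Gamma_\lambda$) acting on $\mathbb R$ by $t\mapsto\lambda^nt+a$; $|g|=\det g$. $C_0^\lambda(\mathbb R)$ is the norm-closed subalgebra of $L^\infty(\mathbb R)$ generated by $\chi_{[a,b)}$, $a<b\in\Gamma_\lambda$, with action $\alpha_g(f)(t)=f(g^{-1}t)$. $A^\lambda=C_0^\lambda(\mathbb R)\rtimes_\alpha G_\lambda$; $f\delta_g$ is the element supported at $g$ with value $f$. With $e=\chi_{[0,1)}\delta_1$, $\mathcal Q^\lambda=eA^\lambda e$. The gauge action $\gamma$ of the circle $\mathbb T$ on $A^\lambda$ (the dual action for $A^\lambda=\mathbb Z\ltimes A_0^\lambda$)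 is determined by $\gamma_z(f\delta_g)=z^nf\delta_g$ when $|g|=\lambda^n$; it restricts to $\mathcal Q^\lambda$. Let $E:A^\lambda\to C_0^\lambda(\mathbb R)$ be the faithful conditional expectation extending $x\mapsto x(1)$, and $\psi(x)=\int_{\mathbb R}E(x)(t)\,dt$ for $x\in\mathcal Q^\lambda$; $\psi$ is a faithful state on $\mathcal Q^\lambda$. *)

theory Defs
  imports "HOL-Analysis.Analysis"
begin

definition Gam :: "real \<Rightarrow> real set" where
  "Gam lam = {x. \<exists>(N::nat) (c::int \<Rightarrow> int).
      x = (\<Sum>k\<in>{-int N..int N}. of_int (c k) * lam powi k)}"

text \<open>Group G_lambda: the pair (n,a) stands for the matrix [lambda^n : a].\<close>
type_synonym grp = "int \<times> real"

definition Gcarrier :: "real \<Rightarrow> grp set" where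
  "Gcarrier lam = {g. snd g \<in> Gam lam}"

definition gmul :: "real \<Rightarrow> grp \<Rightarrow> grp \<Rightarrow> grp" where
  "gmul lam g h = (fst g + fst h, lam powi (fst g) * snd h + snd g)"

definition ginv :: "real \<Rightarrow> grp \<Rightarrow> grp" where
  "ginv lam g = (- fst g, - (lam powi (- fst g)) * snd g)"

definition gunit :: grp where "gunit = (0, 0)"

definition gact :: "real \<Rightarrow> grp \<Rightarrow> real \<Rightarrow> real" where
  "gact lam g t = lam powi (fst g) * t + snd g"

definition alpha :: "real \<Rightarrow> grp \<Rightarrow> (real \<Rightarrow> complex) \<Rightarrow> (real \<Rightarrow> complex)" where
  "alpha lam g f = (\<lambda>t. f (gact lam (ginv lam g) t))"

text \<open>Finite linear combinations of chi_[a,b), a<b in Gamma_lambda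
  (a dense *-subalgebra of C_0^lambda(R)).\<close>
definition stepfun :: "real \<Rightarrow> (real \<Rightarrow> complex) \<Rightarrow> bool" where
  "stepfun lam f \<longleftrightarrow> (\<exists>S c. finite S \<and> S \<subseteq> {(a,b). a \<in> Gam lam \<and> b \<in> Gam lam \<and> a < b} \<and>
      f = (\<lambda>t. \<Sum>(a,b)\<in>S. c (a,b) * indicator {a..<b} t))"

text \<open>Elements of the algebraic crossed product: finitely supported functions
  G_lambda -> step functions; x g is the coefficient of delta_g.\<close>
type_synonym elem = "grp \<Rightarrow> real \<Rightarrow> complex"

definition alg :: "real \<Rightarrow> elem \<Rightarrow> bool" where
  "alg lam x \<longleftrightarrow> finite {g. x g \<noteq> (\<lambda>_. 0)} \<and> {g. x g \<noteq> (\<lambda>_. 0)} \<subseteq> Gcarrier lam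
      \<and> (\<forall>g. stepfun lam (x g))"

text \<open>Product: (f delta_g)(h delta_k) = f alpha_g(h) delta_{gk}.\<close>
definition conv :: "real \<Rightarrow> elem \<Rightarrow> elem \<Rightarrow> elem" where
  "conv lam x y = (\<lambda>g t. \<Sum>h\<in>{h. x h \<noteq> (\<lambda>_. 0)}.
      x h t * alpha lam h (y (gmul lam (ginv lam h) g)) t)"

text \<open>Involution: (f delta_g)^* = alpha_{g^{-1}}(conj f) delta_{g^{-1}}.\<close>
definition star :: "real \<Rightarrow> elem \<Rightarrow> elem" where
  "star lam x = (\<lambda>g. alpha lam g (\<lambda>t. cnj (x (ginv lam g) t)))"

definition addE :: "elem \<Rightarrow> elem \<Rightarrow> elem" where
  "addE x y = (\<lambda>g t. x g t + y g t)"

definition scaleE :: "complex \<Rightarrow> elem \<Rightarrow> elem" where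
  "scaleE c x = (\<lambda>g t. c * x g t)"

definition eproj :: elem where
  "eproj = (\<lambda>g t. if g = gunit then indicator {0..<1} t else 0)"

text \<open>Q_alg: the dense *-subalgebra of Q^lambda = e A^lambda e spanned by the
  elements chi_[a,b) delta_g lying in Q^lambda.\<close>
definition Qalg :: "real \<Rightarrow> elem \<Rightarrow> bool" where
  "Qalg lam x \<longleftrightarrow> alg lam x \<and> conv lam eproj (conv lam x eproj) = x"

definition gauge :: "complex \<Rightarrow> elem \<Rightarrow> elem" where
  "gauge z x = (\<lambda>g t. z powi (fst g) * x g t)"

text \<open>Analytic extension of t |-> gamma_{e^{it}} to complex t.\<close>
definition gauge_ext :: "complex \<Rightarrow> elem \<Rightarrow> elem" where
  "gauge_ext z x = (\<lambda>g t. exp (\<i> * of_int (fst g) * z) * x g t)"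

definition psi :: "elem \<Rightarrow> complex" where
  "psi x = integral UNIV (x gunit)"

text \<open>States of Q^lambda, identified with normalized positive linear functionals
  on the dense *-subalgebra Qalg.\<close>
definition is_state :: "real \<Rightarrow> (elem \<Rightarrow> complex) \<Rightarrow> bool" where
  "is_state lam \<phi> \<longleftrightarrow>
     (\<forall>x y. Qalg lam x \<longrightarrow> Qalg lam y \<longrightarrow> \<phi> (addE x y) = \<phi> x + \<phi> y)
   \<and> (\<forall>c x. Qalg lam x \<longrightarrow> \<phi> (scaleE c x) = c * \<phi> x)
   \<and> (\<forall>x. Qalg lam x \<longrightarrow> Im (\<phi> (conv lam (star lam x) x)) = 0
                        \<and> Re (\<phi> (conv lam (star lam x) x)) \<ge> 0)
   \<and> \<phi> eproj = 1"

text \<open>KMS_beta condition checked on the analytic elements of Qalg.\<close>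
definition is_KMS :: "real \<Rightarrow> real \<Rightarrow> (elem \<Rightarrow> complex) \<Rightarrow> bool" where
  "is_KMS lam \<beta> \<phi> \<longleftrightarrow> is_state lam \<phi> \<and>
     (\<forall>x y. Qalg lam x \<longrightarrow> Qalg lam y \<longrightarrow>
        \<phi> (conv lam x (gauge_ext (\<i> * of_real \<beta>) y)) = \<phi> (conv lam y x))"

end

theory Submission imports Defs begin

lemma Gam_iff: "x \<in> Gam lam \<longleftrightarrow> (\<exists>F c. finite F \<and> x = (\<Sum>k\<in>F. of_int (c k) * lam powi k))"
proof
  assume "x \<in> Gam lam"
  then obtain N c where "x = (\<Sum>k\<in>{-int N..int N}. of_int (c k) * lam powi k)" by (auto simp: Gam_def)
  then show "\<exists>F c. finite F \<and> x = (\<Sum>k\<in>F. of_int (c k) * lam powi k)" by blast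
next
  assume "\<exists>F c. finite F \<and> x = (\<Sum>k\<in>F. of_int (c k) * lam powi k)"
  then obtain F c where F: "finite F" and x: "x = (\<Sum>k\<in>F. of_int (c k) * lam powi k)" by blast
  define N where "N = nat (Max (insert 0 (abs ` F)))"
  have sub: "F \<subseteq> {-int N..int N}"
  proof
    fix k assume "k \<in> F"
    then have "\<bar>k\<bar> \<le> Max (insert 0 (abs ` F))" using F by (intro Max_ge) auto
    moreover have "0 \<le> Max (insert 0 (abs ` F))" using F by (intro Max_ge) auto
    ultimately show "k \<in> {-int N..int N}" unfolding N_def by auto
  qed
  define c' where "c' = (\<lambda>k. if k \<in> F then c k else 0)"
  have "(\<Sum>k\<in>{-int N..int N}. of_int (c' k) * lam powi k) = (\<Sum>k\<in>{-int N..int N}. if k \<in> F then of_int (c k) * lam powi k else 0)"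
    unfolding c'_def by (intro sum.cong) auto
  also have "\<dots> = (\<Sum>k\<in>{-int N..int N} \<inter> F. of_int (c k) * lam powi k)"
    by (rule sum.inter_restrict[symmetric]) simp
  also have "{-int N..int N} \<inter> F = F" using sub by blast
  finally have "(\<Sum>k\<in>{-int N..int N}. of_int (c' k) * lam powi k) = x" unfolding x .
  then have "\<exists>N c. x = (\<Sum>k\<in>{-int N..int N}. of_int (c k) * lam powi k)" by metis
  then show "x \<in> Gam lam" unfolding Gam_def by simp
qed

lemma GamI: "finite F \<Longrightarrow> x = (\<Sum>k\<in>F. of_int (c k) * lam powi k) \<Longrightarrow> x \<in> Gam lam"
  using Gam_iff by blast

lemma GamE: assumes "x \<in> Gam lam" obtains F c where "finite F" "x = (\<Sum>k\<in>F. of_int (c k) * lam powi k)"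
  using assms Gam_iff by blast

lemma sum_if_sub: "finite A \<Longrightarrow> B \<subseteq> A \<Longrightarrow> (\<Sum>x\<in>A. if x \<in> B then f x else 0) = sum f B"
  by (simp add: sum.inter_restrict[symmetric] Int_absorb1)

lemma Gam_add: assumes "x \<in> Gam lam" "y \<in> Gam lam" shows "x + y \<in> Gam lam"
proof -
  obtain F1 c1 where F1: "finite F1" "x = (\<Sum>k\<in>F1. of_int (c1 k) * lam powi k)" using assms(1) Gam_iff by blast
  obtain F2 c2 where F2: "finite F2" "y = (\<Sum>k\<in>F2. of_int (c2 k) * lam powi k)" using assms(2) Gam_iff by blast
  define c where "c = (\<lambda>k. (if k \<in> F1 then c1 k else 0) + (if k \<in> F2 then c2 k else 0))"
  have "(\<Sum>k\<in>F1 \<union> F2. of_int (c k) * lam powi k) =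
     (\<Sum>k\<in>F1 \<union> F2. (if k \<in> F1 then of_int (c1 k) * lam powi k else 0)) + (\<Sum>k\<in>F1 \<union> F2. (if k \<in> F2 then of_int (c2 k) * lam powi k else 0))"
  proof -
    have "\<And>k. of_int (c k) * lam powi k = (if k \<in> F1 then of_int (c1 k) * lam powi k else 0) + (if k \<in> F2 then of_int (c2 k) * lam powi k else 0)"
      unfolding c_def by (simp add: distrib_right)
    then show ?thesis by (simp add: sum.distrib)
  qed
  also have "\<dots> = x + y"
    using F1 F2 by (simp add: sum_if_sub)
  finally have "x + y = (\<Sum>k\<in>F1 \<union> F2. of_int (c k) * lam powi k)" by simp
  then show ?thesis using F1 F2 unfolding Gam_iff[of "x+y" lam] by (intro exI[of _ "F1 \<union> F2"] exI[of _ c]) simp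
qed

lemma Gam_uminus: assumes "x \<in> Gam lam" shows "- x \<in> Gam lam"
proof -
  obtain F c where F: "finite F" "x = (\<Sum>k\<in>F. of_int (c k) * lam powi k)" using assms Gam_iff by blast
  have "- x = (\<Sum>k\<in>F. of_int ((\<lambda>k. - c k) k) * lam powi k)" using F by (simp add: sum_negf)
  then show ?thesis by (rule GamI[OF F(1)])
qed

lemma Gam_diff: "x \<in> Gam lam \<Longrightarrow> y \<in> Gam lam \<Longrightarrow> x - y \<in> Gam lam"
  using Gam_add[of x lam "-y"] Gam_uminus[of y lam] by simp

lemma Gam_mult_int: assumes "x \<in> Gam lam" shows "of_int m * x \<in> Gam lam"
proof -
  obtain F c where F: "finite F" "x = (\<Sum>k\<in>F. of_int (c k) * lam powi k)" using assms Gam_iff by blast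
  have "of_int m * x = (\<Sum>k\<in>F. of_int ((\<lambda>k. m * c k) k) * lam powi k)" using F by (simp add: sum_distrib_left mult.assoc)
  then show ?thesis by (rule GamI[OF F(1)])
qed

lemma Gam_mult_powi: assumes "x \<in> Gam lam" "lam \<noteq> 0" shows "lam powi j * x \<in> Gam lam"
proof -
  obtain F c where F: "finite F" "x = (\<Sum>k\<in>F. of_int (c k) * lam powi k)" using assms Gam_iff by blast
  have "lam powi j * x = (\<Sum>k\<in>F. of_int (c k) * lam powi (k + j))"
    using F assms(2) by (simp add: sum_distrib_left power_int_add mult.commute mult.left_commute)
  also have "\<dots> = (\<Sum>k\<in>(\<lambda>k. k + j) ` F. of_int (c (k - j)) * lam powi k)"
    by (subst sum.reindex) (auto simp: inj_on_def)
  finally show ?thesis using F(1) by (intro GamI[of "(\<lambda>k. k + j) ` F"]) auto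
qed

lemma Gam_0: "0 \<in> Gam lam" by (rule GamI[of "{}" _ "\<lambda>_. 0"]) simp_all
lemma Gam_1: "1 \<in> Gam lam"
proof -
  have "(1::real) = (\<Sum>k\<in>{0::int}. of_int ((\<lambda>_. 1::int) k) * lam powi k)" by simp
  then show ?thesis by (rule GamI[rotated]) simp
qed
lemma Gam_int: "of_int m \<in> Gam lam" using Gam_mult_int[OF Gam_1[of lam], of m] by simp
lemma Gam_nat: "of_nat m \<in> Gam lam" using Gam_int[of "int m" lam] by simp
lemma Gam_powi: "lam \<noteq> 0 \<Longrightarrow> lam powi j \<in> Gam lam" using Gam_mult_powi[OF Gam_1] by fastforce
lemma Gam_mult_nat: "x \<in> Gam lam \<Longrightarrow> of_nat m * x \<in> Gam lam" using Gam_mult_int[of x lam "int m"] by simp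

section \<open>Group lemmas\<close>

lemma powi_inv_cancel: "(lam::real) \<noteq> 0 \<Longrightarrow> lam powi (- n) * lam powi n = 1"
  by (simp add: power_int_minus)
lemma powi_inv_cancel2: "(lam::real) \<noteq> 0 \<Longrightarrow> lam powi n * lam powi (- n) = 1"
  by (simp add: power_int_minus)

lemma gact_ginv_gact[simp]: "lam \<noteq> 0 \<Longrightarrow> gact lam (ginv lam g) (gact lam g t) = t"
  unfolding gact_def ginv_def by (simp add: distrib_left powi_inv_cancel mult.assoc[symmetric])

lemma gact_gact_ginv[simp]: "lam \<noteq> 0 \<Longrightarrow> gact lam g (gact lam (ginv lam g) t) = t"
  unfolding gact_def ginv_def by (simp add: distrib_left right_diff_distrib powi_inv_cancel2 mult.assoc[symmetric])

lemma ginv_ginv[simp]: "lam \<noteq> 0 \<Longrightarrow> ginv lam (ginv lam g) = g"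
  unfolding ginv_def by (cases g) (simp add: mult.assoc[symmetric] powi_inv_cancel2)

lemma gmul_ginv_gmul[simp]: "lam \<noteq> 0 \<Longrightarrow> gmul lam (ginv lam g) (gmul lam g h) = h"
  unfolding ginv_def gmul_def by (cases g, cases h) (simp add: distrib_left powi_inv_cancel mult.assoc[symmetric])

lemma gmul_gmul_ginv[simp]: "lam \<noteq> 0 \<Longrightarrow> gmul lam g (gmul lam (ginv lam g) h) = h"
  unfolding ginv_def gmul_def by (cases g, cases h) (simp add: distrib_left right_diff_distrib powi_inv_cancel2 mult.assoc[symmetric])

lemma gmul_unit_left[simp]: "gmul lam gunit g = g"
  unfolding gmul_def gunit_def by simp
lemma gmul_unit_right[simp]: "gmul lam g gunit = g"
  unfolding gmul_def gunit_def by simp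

lemma gmul_ginv_right[simp]: "lam \<noteq> 0 \<Longrightarrow> gmul lam g (ginv lam g) = gunit"
  using gmul_gmul_ginv[of lam g gunit] by simp
lemma gmul_ginv_left[simp]: "lam \<noteq> 0 \<Longrightarrow> gmul lam (ginv lam g) g = gunit"
  using gmul_ginv_gmul[of lam g gunit] by simp

lemma ginv_unit[simp]: "ginv lam gunit = gunit"
  unfolding ginv_def gunit_def by simp
lemma gact_unit[simp]: "gact lam gunit t = t"
  unfolding gact_def gunit_def by simp

lemma ginv_inj: "lam \<noteq> 0 \<Longrightarrow> ginv lam g = ginv lam h \<longleftrightarrow> g = h"
  by (metis ginv_ginv)

lemma fst_ginv[simp]: "fst (ginv lam g) = - fst g"
  unfolding ginv_def by simp

lemma gunit_Gcarrier: "gunit \<in> Gcarrier lam"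
  unfolding gunit_def Gcarrier_def by (simp add: Gam_0)

lemma ginv_Gcarrier: "lam \<noteq> 0 \<Longrightarrow> g \<in> Gcarrier lam \<Longrightarrow> ginv lam g \<in> Gcarrier lam"
  unfolding Gcarrier_def ginv_def
  using Gam_uminus Gam_mult_powi by (simp add: Gam_mult_powi Gam_uminus)

lemma gact_Gam: "lam \<noteq> 0 \<Longrightarrow> g \<in> Gcarrier lam \<Longrightarrow> t \<in> Gam lam \<Longrightarrow> gact lam g t \<in> Gam lam"
  unfolding Gcarrier_def gact_def by (simp add: Gam_add Gam_mult_powi)

lemma powi_pos: "0 < (lam::real) \<Longrightarrow> 0 < lam powi n"
  by simp

lemma gact_le_iff[simp]: "0 < lam \<Longrightarrow> gact lam g s \<le> gact lam g t \<longleftrightarrow> s \<le> t"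
  unfolding gact_def by simp
lemma gact_less_iff[simp]: "0 < lam \<Longrightarrow> gact lam g s < gact lam g t \<longleftrightarrow> s < t"
  unfolding gact_def by simp


section \<open>Step functions\<close>

inductive SF :: "(real \<Rightarrow> complex) \<Rightarrow> bool" where
  SF0: "SF (\<lambda>_. 0)"
| SFstep: "SF f \<Longrightarrow> SF (\<lambda>t. f t + c * indicator {a..<b} t)"

lemma SF_ind: "SF (\<lambda>t. c * indicator {a..<b} t)"
  using SFstep[OF SF0, of c a b] by simp

lemma SF_add: assumes "SF f" "SF g" shows "SF (\<lambda>t. f t + g t)"
  using assms(2)
proof (induction g rule: SF.induct)
  case SF0 then show ?case using assms(1) by simp
next
  case (SFstep g c a b)
  have "SF (\<lambda>t. (f t + g t) + c * indicator {a..<b} t)" using SFstep assms(1) by (intro SF.SFstep) auto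
  then show ?case by (simp add: add.assoc)
qed

lemma SF_cmult: "SF f \<Longrightarrow> SF (\<lambda>t. d * f t)"
proof (induction f rule: SF.induct)
  case SF0 then show ?case by (simp add: SF.SF0)
next
  case (SFstep f c a b)
  have "SF (\<lambda>t. d * f t + (d * c) * indicator {a..<b} t)" using SFstep by (intro SF.SFstep) auto
  then show ?case by (simp add: distrib_left mult.assoc)
qed

lemma SF_sum: "finite I \<Longrightarrow> (\<And>i. i \<in> I \<Longrightarrow> SF (f i)) \<Longrightarrow> SF (\<lambda>t. \<Sum>i\<in>I. f i t)"
proof (induction I rule: finite_induct)
  case empty then show ?case by (simp add: SF0)
next
  case (insert x F)
  then show ?case using SF_add[of "f x" "\<lambda>t. \<Sum>i\<in>F. f i t"] by simp
qed

lemma indicator_Ico_mult: "(indicator {a..<b::real} t :: complex) * indicator {a'..<b'} t = indicator {max a a'..<min b b'} t"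
  by (auto simp: indicator_def max_def min_def)

lemma SF_mult_ind: "SF f \<Longrightarrow> SF (\<lambda>t. f t * indicator {a'..<b'} t)"
proof (induction f rule: SF.induct)
  case SF0 then show ?case by (simp add: SF.SF0)
next
  case (SFstep f c a b)
  have "SF (\<lambda>t. f t * indicator {a'..<b'} t + c * indicator {max a a'..<min b b'} t)"
    using SFstep by (intro SF.SFstep) auto
  then show ?case by (simp add: distrib_right mult.assoc indicator_Ico_mult)
qed

lemma SF_mult: assumes "SF f" "SF g" shows "SF (\<lambda>t. f t * g t)"
  using assms(2)
proof (induction g rule: SF.induct)
  case SF0 then show ?case by (simp add: SF.SF0)
next
  case (SFstep g c a b)
  have "SF (\<lambda>t. f t * g t + c * (f t * indicator {a..<b} t))"
    using SFstep assms(1) by (intro SF_add SF_cmult SF_mult_ind) auto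
  then show ?case by (simp add: distrib_left mult.commute mult.left_commute)
qed

lemma indicator_Ico_affine:
  assumes "0 < (r::real)"
  shows "(indicator {a..<b} (r * s + d) :: complex) = indicator {(a - d) / r..<(b - d) / r} s"
proof -
  have "a \<le> r * s + d \<longleftrightarrow> (a - d) / r \<le> s" using assms by (simp add: field_simps)
  moreover have "r * s + d < b \<longleftrightarrow> s < (b - d) / r" using assms by (simp add: field_simps)
  ultimately show ?thesis by (simp add: indicator_def)
qed

lemma SF_affine: "SF f \<Longrightarrow> 0 < r \<Longrightarrow> SF (\<lambda>s. f (r * s + d))"
proof (induction f rule: SF.induct)
  case SF0 then show ?case by (simp add: SF.SF0)
next
  case (SFstep f c a b)
  have "SF (\<lambda>s. f (r * s + d) + c * indicator {(a - d) / r..<(b - d) / r} s)"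
    using SFstep by (intro SF.SFstep) auto
  then show ?case using indicator_Ico_affine[OF SFstep(3)] by simp
qed

lemma SF_cnj: "SF f \<Longrightarrow> SF (\<lambda>t. cnj (f t))"
proof (induction f rule: SF.induct)
  case SF0 then show ?case by (simp add: SF.SF0)
next
  case (SFstep f c a b)
  have "SF (\<lambda>t. cnj (f t) + cnj c * indicator {a..<b} t)"
    using SFstep by (intro SF.SFstep) auto
  moreover have "cnj (indicator {a..<b} t :: complex) = indicator {a..<b} t" for t
    by (simp add: indicator_def)
  ultimately show ?case by simp
qed

lemma ind_has_int: "((\<lambda>t. indicator {a..<b} t :: complex) has_integral of_real (b - a)) UNIV" if "a \<le> b" for a b :: real
proof -
  have "((\<lambda>t. 1::complex) has_integral of_real (b - a)) {a..b}"
    using has_integral_const_real[of "1::complex" a b] that by (simp add: scaleR_conv_of_real)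
  then have *: "((\<lambda>t. if t \<in> {a..b} then 1::complex else 0) has_integral of_real (b - a)) UNIV"
    by (subst has_integral_restrict_UNIV)
  show ?thesis
    by (rule has_integral_spike_finite[where S="{b}", OF _ _ *]) (auto simp: indicator_def)
qed

definition ilen :: "real \<Rightarrow> real \<Rightarrow> real" where "ilen a b = (if a \<le> b then b - a else 0)"

lemma ind_has_int': "((\<lambda>t. indicator {a..<b::real} t :: complex) has_integral of_real (ilen a b)) UNIV"
proof (cases "a \<le> b")
  case True then show ?thesis using ind_has_int[OF True] by (simp add: ilen_def)
next
  case False
  then have "{a..<b} = {}" by auto
  then show ?thesis using False by (simp add: ilen_def)
qed

lemma ind_integrable: "(\<lambda>t. indicator {a..<b::real} t :: complex) integrable_on UNIV"
  using ind_has_int'[of a b] by blast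

lemma ind_integral: "integral UNIV (\<lambda>t. indicator {a..<b::real} t :: complex) = of_real (ilen a b)"
  using ind_has_int' by (rule integral_unique)

lemma SF_integrable: "SF f \<Longrightarrow> f integrable_on UNIV"
proof (induction f rule: SF.induct)
  case SF0 then show ?case by (simp add: integrable_0)
next
  case (SFstep f c a b)
  then show ?case by (intro integrable_add integrable_on_mult_right ind_integrable)
qed

lemma SF_integral_step: "SF f \<Longrightarrow> integral UNIV (\<lambda>t. f t + c * indicator {a..<b} t) = integral UNIV f + c * of_real (ilen a b)"
  by (subst integral_add) (auto simp: SF_integrable integrable_on_mult_right ind_integrable ind_integral)

lemma SF_integral_affine: "SF f \<Longrightarrow> 0 < r \<Longrightarrow> integral UNIV (\<lambda>s. f (r * s + d)) = integral UNIV f / of_real r"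
proof (induction f rule: SF.induct)
  case SF0 then show ?case by simp
next
  case (SFstep f c a b)
  have lenr: "ilen ((a - d) / r) ((b - d) / r) = ilen a b / r"
    using SFstep(3) by (auto simp: ilen_def field_simps)
  have "integral UNIV (\<lambda>s. f (r * s + d) + c * indicator {a..<b} (r * s + d))
      = integral UNIV (\<lambda>s. f (r * s + d) + c * indicator {(a - d) / r..<(b - d) / r} s)"
    using indicator_Ico_affine[OF SFstep(3)] by simp
  also have "\<dots> = integral UNIV (\<lambda>s. f (r * s + d)) + c * of_real (ilen ((a - d) / r) ((b - d) / r))"
    using SFstep by (intro SF_integral_step SF_affine) auto
  also have "\<dots> = (integral UNIV f + c * of_real (ilen a b)) / of_real r"
  proof -
    have "c * of_real (ilen ((a - d) / r) ((b - d) / r)) = c * of_real (ilen a b) / of_real r"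
      using lenr by simp
    then show ?thesis using SFstep by (simp add: add_divide_distrib)
  qed
  also have "\<dots> = integral UNIV (\<lambda>t. f t + c * indicator {a..<b} t) / of_real r"
    using SFstep by (simp add: SF_integral_step)
  finally show ?case .
qed

lemma SF_integral_nonneg:
  assumes "SF f" and "\<And>t. f t = of_real (h t)" and "\<And>t. 0 \<le> h t"
  shows "Im (integral UNIV f) = 0 \<and> 0 \<le> Re (integral UNIV f)"
proof -
  have fi: "f integrable_on UNIV" using assms(1) by (rule SF_integrable)
  have "Im (integral UNIV f) = integral UNIV (Im \<circ> f)"
    using integral_linear[OF fi bounded_linear_Im] by simp
  also have "Im \<circ> f = (\<lambda>_. 0)" using assms(2) by (auto simp: fun_eq_iff)
  finally have 1: "Im (integral UNIV f) = 0" by simp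
  have "Re (integral UNIV f) = integral UNIV (Re \<circ> f)"
    using integral_linear[OF fi bounded_linear_Re] by simp
  also have "\<dots> \<ge> 0"
    using integrable_linear[OF fi bounded_linear_Re] assms(2,3) by (intro integral_nonneg) auto
  finally show ?thesis using 1 by simp
qed

lemma stepfun_SF: "stepfun lam f \<Longrightarrow> SF f"
proof -
  assume "stepfun lam f"
  then obtain S c where S: "finite S" and f: "f = (\<lambda>t. \<Sum>(a,b)\<in>S. c (a,b) * indicator {a..<b} t)"
    unfolding stepfun_def by blast
  have "SF (\<lambda>t. \<Sum>p\<in>S. c p * indicator {fst p..<snd p} t)"
    using S by (intro SF_sum SF_ind)
  moreover have "(\<lambda>t. \<Sum>p\<in>S. c p * indicator {fst p..<snd p} t) = f"
    unfolding f by (intro ext sum.cong) auto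
  ultimately show ?thesis by simp
qed


definition mk :: "(real \<Rightarrow> complex) \<Rightarrow> grp \<Rightarrow> elem" where
  "mk f g = (\<lambda>h t. if h = g then f t else 0)"

definition zeroE :: elem where "zeroE = (\<lambda>g t. 0)"

lemma supp_mk: "{h. mk f g h \<noteq> (\<lambda>_. 0)} = (if f = (\<lambda>_. 0) then {} else {g})"
  unfolding mk_def by (auto simp: fun_eq_iff)

lemma alpha_zero[simp]: "alpha lam g (\<lambda>_. 0) = (\<lambda>_. 0)"
  unfolding alpha_def by simp

lemma gact_ginv_expr: "0 < lam \<Longrightarrow> gact lam (ginv lam g) t = (t - snd g) / lam powi (fst g)"
  unfolding gact_def ginv_def by (simp add: power_int_minus field_simps)

lemma conv_mk:
  assumes "lam \<noteq> 0"
  shows "conv lam (mk f g) (mk f' h) = mk (\<lambda>t. f t * alpha lam g f' t) (gmul lam g h)"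
proof (cases "f = (\<lambda>_. 0)")
  case True
  then show ?thesis unfolding conv_def supp_mk by (simp add: mk_def fun_eq_iff)
next
  case False
  have eq: "gmul lam (ginv lam g) k = h \<longleftrightarrow> k = gmul lam g h" for k
    using assms by (metis gmul_gmul_ginv gmul_ginv_gmul)
  show ?thesis using False unfolding conv_def supp_mk
    by (auto simp: fun_eq_iff mk_def eq)
qed

lemma star_mk:
  assumes "lam \<noteq> 0"
  shows "star lam (mk f g) = mk (alpha lam (ginv lam g) (\<lambda>t. cnj (f t))) (ginv lam g)"
proof -
  have eq: "ginv lam h = g \<longleftrightarrow> h = ginv lam g" for h
    using assms by (metis ginv_ginv)
  show ?thesis unfolding star_def mk_def by (auto simp: fun_eq_iff eq alpha_def)
qed

lemma gauge_ext_mk: "gauge_ext z (mk f g) = mk (\<lambda>t. exp (\<i> * of_int (fst g) * z) * f t) g"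
  unfolding gauge_ext_def mk_def by (auto simp: fun_eq_iff)

lemma addE_mk: "addE (mk f g) (mk f' g) = mk (\<lambda>t. f t + f' t) g"
  unfolding addE_def mk_def by (auto simp: fun_eq_iff)

lemma scaleE_mk: "scaleE c (mk f g) = mk (\<lambda>t. c * f t) g"
  unfolding scaleE_def mk_def by (auto simp: fun_eq_iff)

lemma eproj_mk: "eproj = mk (indicator {0..<1}) gunit"
  unfolding eproj_def mk_def by (auto simp: fun_eq_iff)

lemma mk_zero: "mk (\<lambda>_. 0) g = zeroE"
  unfolding mk_def zeroE_def by (auto simp: fun_eq_iff)

lemma mk_gunit_at: "mk f g gunit = (if g = gunit then f else (\<lambda>_. 0))"
  unfolding mk_def by auto

lemma conv_eproj_right:
  assumes "lam \<noteq> 0" "finite {g. x g \<noteq> (\<lambda>_. 0)}"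
  shows "conv lam x eproj = (\<lambda>g t. x g t * indicator {0..<1} (gact lam (ginv lam g) t))"
proof (intro ext)
  fix g t
  let ?S = "{g. x g \<noteq> (\<lambda>_. 0)}"
  have eq: "gmul lam (ginv lam h) g = gunit \<longleftrightarrow> h = g" for h
    using assms(1) by (metis gmul_gmul_ginv gmul_unit_right gmul_ginv_left)
  have "conv lam x eproj g t = (\<Sum>h\<in>?S. if h = g then x g t * indicator {0..<1} (gact lam (ginv lam g) t) else 0)"
    unfolding conv_def by (intro sum.cong) (auto simp: eproj_def eq alpha_def)
  also have "\<dots> = x g t * indicator {0..<1} (gact lam (ginv lam g) t)"
    using assms(2) by (auto simp: sum.delta')
  finally show "conv lam x eproj g t = x g t * indicator {0..<1} (gact lam (ginv lam g) t)" .
qed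

lemma supp_eproj: "{g. eproj g \<noteq> (\<lambda>_. 0)} = {gunit}"
  unfolding eproj_def by (auto simp: fun_eq_iff indicator_def intro: exI[of _ 0])

lemma conv_eproj_left: "conv lam eproj z = (\<lambda>g t. indicator {0..<1} t * z g t)"
  unfolding conv_def supp_eproj by (auto simp: fun_eq_iff eproj_def alpha_def)

lemma Qalg_iff:
  assumes "lam \<noteq> 0"
  shows "Qalg lam x \<longleftrightarrow> alg lam x \<and> (\<forall>g t. x g t \<noteq> 0 \<longrightarrow> t \<in> {0..<1} \<and> gact lam (ginv lam g) t \<in> {0..<1})"
proof (cases "alg lam x")
  case True
  then have fin: "finite {g. x g \<noteq> (\<lambda>_. 0)}" unfolding alg_def by simp
  have "conv lam eproj (conv lam x eproj) = (\<lambda>g t. indicator {0..<1} t * (x g t * indicator {0..<1} (gact lam (ginv lam g) t)))"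
    unfolding conv_eproj_left conv_eproj_right[OF assms fin] ..
  moreover have "(indicator {0..<1} t * (x g t * indicator {0..<1} (gact lam (ginv lam g) t)) = x g t)
     \<longleftrightarrow> (x g t \<noteq> 0 \<longrightarrow> t \<in> {0..<1} \<and> gact lam (ginv lam g) t \<in> {0..<1})" for g t
    unfolding indicator_def by (cases "t \<in> {0..<1}"; cases "gact lam (ginv lam g) t \<in> {0..<1}") auto
  ultimately show ?thesis using True unfolding Qalg_def fun_eq_iff by metis
next
  case False then show ?thesis unfolding Qalg_def by simp
qed

lemma stepfun_alt: "stepfun lam f \<longleftrightarrow> (\<exists>S c. finite S \<and> S \<subseteq> {(a,b). a \<in> Gam lam \<and> b \<in> Gam lam \<and> a < b} \<and>
      f = (\<lambda>t. \<Sum>p\<in>S. c p * indicator {fst p..<snd p} t))"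
proof -
  have "(\<lambda>t. \<Sum>(a,b)\<in>S. c (a,b) * indicator {a..<b} t) = (\<lambda>t. \<Sum>p\<in>S. c p * indicator {fst p..<snd p} t)" for S and c :: "real \<times> real \<Rightarrow> complex"
    by (intro ext sum.cong) (auto simp: split_def)
  then show ?thesis unfolding stepfun_def by simp
qed

lemma stepfunI:
  assumes "finite S" "S \<subseteq> {(a,b). a \<in> Gam lam \<and> b \<in> Gam lam \<and> a < b}"
    "f = (\<lambda>t. \<Sum>p\<in>S. c p * indicator {fst p..<snd p} t)"
  shows "stepfun lam f"
  unfolding stepfun_alt using assms by blast

lemma stepfun_zero: "stepfun lam (\<lambda>_. 0)"
  unfolding stepfun_alt by (rule exI[of _ "{}"]) simp

lemma stepfun_add:
  assumes "stepfun lam f" "stepfun lam f'"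
  shows "stepfun lam (\<lambda>t. f t + f' t)"
proof -
  obtain S c where S: "finite S" "S \<subseteq> {(a,b). a \<in> Gam lam \<and> b \<in> Gam lam \<and> a < b}"
      and f: "f = (\<lambda>t. \<Sum>p\<in>S. c p * indicator {fst p..<snd p} t)" using assms(1) unfolding stepfun_alt by blast
  obtain S' c' where S': "finite S'" "S' \<subseteq> {(a,b). a \<in> Gam lam \<and> b \<in> Gam lam \<and> a < b}"
      and f': "f' = (\<lambda>t. \<Sum>p\<in>S'. c' p * indicator {fst p..<snd p} t)" using assms(2) unfolding stepfun_alt by blast
  define d where "d = (\<lambda>p. (if p \<in> S then c p else 0) + (if p \<in> S' then c' p else 0))"
  have "(\<Sum>p\<in>S \<union> S'. d p * indicator {fst p..<snd p} t) = f t + f' t" for t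
  proof -
    have "(\<Sum>p\<in>S \<union> S'. d p * indicator {fst p..<snd p} t) =
        (\<Sum>p\<in>S \<union> S'. if p \<in> S then c p * indicator {fst p..<snd p} t else 0) +
        (\<Sum>p\<in>S \<union> S'. if p \<in> S' then c' p * indicator {fst p..<snd p} t else 0)"
      unfolding d_def sum.distrib[symmetric] by (intro sum.cong) (auto simp: distrib_right)
    also have "\<dots> = f t + f' t" unfolding f f' using S S' by (simp add: sum_if_sub)
    finally show ?thesis .
  qed
  then have e: "(\<lambda>t. f t + f' t) = (\<lambda>t. \<Sum>p\<in>S \<union> S'. d p * indicator {fst p..<snd p} t)"
    by (simp add: fun_eq_iff)
  have u: "S \<union> S' \<subseteq> {(a,b). a \<in> Gam lam \<and> b \<in> Gam lam \<and> a < b}" using S S' by blast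
  have fu: "finite (S \<union> S')" using S S' by simp
  show ?thesis by (rule stepfunI[OF fu u e])
qed

lemma stepfun_scale:
  assumes "stepfun lam f"
  shows "stepfun lam (\<lambda>t. d * f t)"
proof -
  obtain S c where S: "finite S" "S \<subseteq> {(a,b). a \<in> Gam lam \<and> b \<in> Gam lam \<and> a < b}"
      and f: "f = (\<lambda>t. \<Sum>p\<in>S. c p * indicator {fst p..<snd p} t)" using assms(1) unfolding stepfun_alt by blast
  have "(\<lambda>t. d * f t) = (\<lambda>t. \<Sum>p\<in>S. (d * c p) * indicator {fst p..<snd p} t)"
    unfolding f by (simp add: sum_distrib_left mult.assoc)
  then show ?thesis by (intro stepfunI[OF S])
qed

lemma stepfun_ind:
  assumes "a \<in> Gam lam" "b \<in> Gam lam"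
  shows "stepfun lam (\<lambda>t. indicator {a..<b} t)"
proof (cases "a < b")
  case True
  have "(\<lambda>t. indicator {a..<b} t :: complex) = (\<lambda>t. \<Sum>p\<in>{(a,b)}. (\<lambda>_. 1) p * indicator {fst p..<snd p} t)"
    by simp
  moreover have "{(a,b)} \<subseteq> {(a,b). a \<in> Gam lam \<and> b \<in> Gam lam \<and> a < b}" using True assms by simp
  ultimately show ?thesis by (intro stepfunI[of "{(a,b)}" _ _ "\<lambda>_. 1"]) auto
next
  case False
  then have "(\<lambda>t. indicator {a..<b} t :: complex) = (\<lambda>_. 0)" by (auto simp: fun_eq_iff)
  then show ?thesis using stepfun_zero by metis
qed

lemma alg_zero: "alg lam zeroE"
  unfolding alg_def zeroE_def by (simp add: stepfun_zero)

lemma supp_addE_sub: "{g. addE x y g \<noteq> (\<lambda>_. 0)} \<subseteq> {g. x g \<noteq> (\<lambda>_. 0)} \<union> {g. y g \<noteq> (\<lambda>_. 0)}"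
  unfolding addE_def by (auto simp: fun_eq_iff)

lemma alg_addE:
  assumes "alg lam x" "alg lam y" shows "alg lam (addE x y)"
proof -
  have fin: "finite ({g. x g \<noteq> (\<lambda>_. 0)} \<union> {g. y g \<noteq> (\<lambda>_. 0)})" using assms unfolding alg_def by auto
  have f: "finite {g. addE x y g \<noteq> (\<lambda>_. 0)}" using finite_subset[OF supp_addE_sub fin] .
  have c: "{g. addE x y g \<noteq> (\<lambda>_. 0)} \<subseteq> Gcarrier lam" using supp_addE_sub[of x y] assms unfolding alg_def by blast
  have s: "\<forall>g. stepfun lam (addE x y g)" using assms unfolding alg_def addE_def by (auto intro: stepfun_add)
  show ?thesis unfolding alg_def using f c s by blast
qed

lemma alg_scaleE: "alg lam x \<Longrightarrow> alg lam (scaleE c x)"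
proof -
  assume a: "alg lam x"
  have "{g. scaleE c x g \<noteq> (\<lambda>_. 0)} \<subseteq> {g. x g \<noteq> (\<lambda>_. 0)}" unfolding scaleE_def by (auto simp: fun_eq_iff)
  then show ?thesis using a unfolding alg_def by (auto simp: scaleE_def intro: stepfun_scale finite_subset)
qed

lemma Qalg_zero: "lam \<noteq> 0 \<Longrightarrow> Qalg lam zeroE"
  using alg_zero[of lam] by (auto simp add: Qalg_iff zeroE_def)

lemma Qalg_addE:
  assumes "lam \<noteq> 0" "Qalg lam x" "Qalg lam y" shows "Qalg lam (addE x y)"
proof -
  have "alg lam (addE x y)" using assms Qalg_iff alg_addE by blast
  moreover have "addE x y g t \<noteq> 0 \<Longrightarrow> t \<in> {0..<1} \<and> gact lam (ginv lam g) t \<in> {0..<1}" for g t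
  proof -
    assume "addE x y g t \<noteq> 0"
    then have "x g t \<noteq> 0 \<or> y g t \<noteq> 0" unfolding addE_def by auto
    then show ?thesis using assms unfolding Qalg_iff[OF assms(1)] by blast
  qed
  ultimately show ?thesis unfolding Qalg_iff[OF assms(1)] by blast
qed

lemma Qalg_scaleE: "lam \<noteq> 0 \<Longrightarrow> Qalg lam x \<Longrightarrow> Qalg lam (scaleE c x)"
  using alg_scaleE[of lam x c] by (auto simp: Qalg_iff scaleE_def)

lemma Qalg_mk:
  assumes "lam \<noteq> 0" "g \<in> Gcarrier lam" "stepfun lam f"
    and "\<And>t. f t \<noteq> 0 \<Longrightarrow> t \<in> {0..<1} \<and> gact lam (ginv lam g) t \<in> {0..<1}"
  shows "Qalg lam (mk f g)"
proof -
  have "stepfun lam (mk f g h)" for h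
    by (cases "h = g") (simp_all add: mk_def stepfun_zero assms)
  then show ?thesis
    unfolding Qalg_iff[OF assms(1)] alg_def supp_mk
    using assms by (auto simp: mk_def)
qed


section \<open>psi is a KMS state\<close>

lemma alg_SF: "alg lam x \<Longrightarrow> SF (x g)"
  unfolding alg_def by (blast intro: stepfun_SF)

lemma cnj_mult_self: "cnj z * z = complex_of_real ((cmod z)\<^sup>2)"
  using complex_norm_square[of z] by (simp only: mult.commute)

lemma SF_gact: "SF f \<Longrightarrow> 0 < lam \<Longrightarrow> SF (\<lambda>t. f (gact lam g t))"
  unfolding gact_def by (rule SF_affine) auto

lemma SF_sum': "(\<And>i. i \<in> I \<Longrightarrow> SF (f i)) \<Longrightarrow> SF (\<lambda>t. \<Sum>i\<in>I. f i t)"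
  by (cases "finite I") (auto intro: SF_sum SF0)

lemma conv_gunit: "conv lam x y gunit = (\<lambda>t. \<Sum>h\<in>{h. x h \<noteq> (\<lambda>_. 0)}. x h t * y (ginv lam h) (gact lam (ginv lam h) t))"
  unfolding conv_def alpha_def by simp

lemma psi_add: "alg lam x \<Longrightarrow> alg lam y \<Longrightarrow> psi (addE x y) = psi x + psi y"
  unfolding psi_def addE_def by (intro integral_add SF_integrable alg_SF)

lemma psi_scale: "psi (scaleE c x) = c * psi x"
  unfolding psi_def scaleE_def by simp

lemma psi_pos:
  assumes "0 < lam" "alg lam x"
  shows "Im (psi (conv lam (star lam x) x)) = 0 \<and> 0 \<le> Re (psi (conv lam (star lam x) x))"
proof -
  let ?S = "{h. star lam x h \<noteq> (\<lambda>_. 0)}"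
  have eq: "conv lam (star lam x) x gunit = (\<lambda>t. of_real (\<Sum>h\<in>?S. (cmod (x (ginv lam h) (gact lam (ginv lam h) t)))\<^sup>2))"
    unfolding conv_gunit
  proof (intro ext)
    fix t
    show "(\<Sum>h\<in>?S. star lam x h t * x (ginv lam h) (gact lam (ginv lam h) t)) =
          complex_of_real (\<Sum>h\<in>?S. (cmod (x (ginv lam h) (gact lam (ginv lam h) t)))\<^sup>2)"
      unfolding of_real_sum by (intro sum.cong refl) (simp only: star_def alpha_def cnj_mult_self)
  qed
  have "SF (\<lambda>t. star lam x h t * x (ginv lam h) (gact lam (ginv lam h) t))" for h
  proof -
    have "SF (\<lambda>t. cnj (x (ginv lam h) (gact lam (ginv lam h) t)) * x (ginv lam h) (gact lam (ginv lam h) t))"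
      using assms by (intro SF_mult SF_cnj SF_gact alg_SF)
    then show ?thesis by (simp add: star_def alpha_def)
  qed
  then have "SF (conv lam (star lam x) x gunit)"
    unfolding conv_gunit by (intro SF_sum')
  then show ?thesis unfolding psi_def
    by (rule SF_integral_nonneg[OF _ fun_cong[OF eq]]) (intro sum_nonneg, simp)
qed

lemma psi_eproj: "psi eproj = 1"
  unfolding psi_def eproj_def using ind_integral[of 0 1] by (simp add: ilen_def)

lemma psi_state: "0 < lam \<Longrightarrow> is_state lam psi"
  unfolding is_state_def using psi_add psi_scale psi_pos psi_eproj
  by (auto simp: Qalg_def)

lemma exp_beta:
  assumes "0 < lam"
  shows "exp (\<i> * of_int (- n) * (\<i> * of_real (ln (1 / lam)))) = complex_of_real (lam powi (- n))"
proof -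
  have "\<i> * of_int (- n) * (\<i> * of_real (ln (1 / lam))) = complex_of_real (of_int n * ln (1 / lam))"
    by (simp add: algebra_simps)
  then have "exp (\<i> * of_int (- n) * (\<i> * of_real (ln (1 / lam)))) = of_real (exp (of_int n * ln (1 / lam)))"
    by (simp only: exp_of_real)
  also have "exp (of_int n * ln (1 / lam)) = exp (ln (1 / lam)) powi n"
    by (simp add: exp_power_int)
  also have "\<dots> = lam powi (- n)"
    using assms by (simp add: power_int_minus divide_inverse power_int_inverse del: inverse_divide)
  finally show ?thesis .
qed

lemma psi_KMS_eq:
  assumes lam: "0 < lam" and x: "alg lam x" and y: "alg lam y"
  shows "psi (conv lam x (gauge_ext (\<i> * of_real (ln (1 / lam))) y)) = psi (conv lam y x)"
proof -
  have l0: "lam \<noteq> 0" using lam by simp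
  define Sx where "Sx = {h. x h \<noteq> (\<lambda>_. 0)}"
  define Sy where "Sy = {h. y h \<noteq> (\<lambda>_. 0)}"
  have fSx: "finite Sx" and fSy: "finite Sy" using x y unfolding alg_def Sx_def Sy_def by auto
  define T where "T h = integral UNIV (\<lambda>t. x h t * y (ginv lam h) (gact lam (ginv lam h) t))" for h
  define U where "U k = integral UNIV (\<lambda>t. y k t * x (ginv lam k) (gact lam (ginv lam k) t))" for k
  define w where "w (h::grp) = complex_of_real (lam powi (- fst h))" for h
  have SFT: "SF (\<lambda>t. x h t * y (ginv lam h) (gact lam (ginv lam h) t))" for h
    using lam x y by (intro SF_mult SF_gact alg_SF)
  have SFU: "SF (\<lambda>t. y k t * x (ginv lam k) (gact lam (ginv lam k) t))" for k
    using lam x y by (intro SF_mult SF_gact alg_SF)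
  have key: "w h * T h = U (ginv lam h)" for h
  proof -
    have "U (ginv lam h) = integral UNIV (\<lambda>s. x h (gact lam h s) * y (ginv lam h) (gact lam (ginv lam h) (gact lam h s)))"
      unfolding U_def using l0 by (simp add: mult.commute)
    also have "\<dots> = integral UNIV (\<lambda>s. (\<lambda>t. x h t * y (ginv lam h) (gact lam (ginv lam h) t)) (lam powi (fst h) * s + snd h))"
      unfolding gact_def[of lam h] by simp
    also have "\<dots> = T h / of_real (lam powi (fst h))"
      unfolding T_def using lam by (intro SF_integral_affine SFT) simp
    also have "\<dots> = w h * T h"
      unfolding w_def using lam by (simp add: power_int_minus field_simps)
    finally show ?thesis by simp
  qed
  have "psi (conv lam x (gauge_ext (\<i> * of_real (ln (1 / lam))) y)) =
      integral UNIV (\<lambda>t. \<Sum>h\<in>Sx. w h * (x h t * y (ginv lam h) (gact lam (ginv lam h) t)))"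
  proof -
    have g: "gauge_ext (\<i> * of_real (ln (1 / lam))) y (ginv lam h) s = w h * y (ginv lam h) s" for h s
      unfolding gauge_ext_def fst_ginv w_def exp_beta[OF lam] ..
    show ?thesis
      unfolding psi_def conv_gunit Sx_def g by (simp add: mult.left_commute)
  qed
  also have "\<dots> = (\<Sum>h\<in>Sx. w h * T h)"
    unfolding T_def using fSx
    by (subst integral_sum) (auto intro!: integrable_on_mult_right SF_integrable SFT SF_cmult)
  also have "\<dots> = (\<Sum>h\<in>Sx \<union> ginv lam ` Sy. w h * T h)"
  proof (rule sum.mono_neutral_left)
    show "\<forall>h\<in>Sx \<union> ginv lam ` Sy - Sx. w h * T h = 0"
      unfolding T_def Sx_def by auto
  qed (use fSx fSy in auto)
  also have "\<dots> = (\<Sum>h\<in>Sx \<union> ginv lam ` Sy. U (ginv lam h))"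
    using key by simp
  also have "\<dots> = (\<Sum>k\<in>ginv lam ` (Sx \<union> ginv lam ` Sy). U k)"
    using l0 by (subst sum.reindex) (auto simp: inj_on_def ginv_inj)
  also have "ginv lam ` (Sx \<union> ginv lam ` Sy) = ginv lam ` Sx \<union> Sy"
    using l0 by (auto simp: image_Un image_image)
  also have "(\<Sum>k\<in>ginv lam ` Sx \<union> Sy. U k) = (\<Sum>k\<in>Sy. U k)"
  proof (rule sum.mono_neutral_right)
    show "\<forall>k\<in>ginv lam ` Sx \<union> Sy - Sy. U k = 0"
      unfolding U_def Sy_def by auto
  qed (use fSx fSy in auto)
  also have "\<dots> = integral UNIV (\<lambda>t. \<Sum>k\<in>Sy. y k t * x (ginv lam k) (gact lam (ginv lam k) t))"
    unfolding U_def using fSy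
    by (subst integral_sum) (auto intro: SF_integrable SFU)
  also have "\<dots> = psi (conv lam y x)"
    unfolding psi_def conv_gunit Sy_def ..
  finally show ?thesis .
qed

lemma psi_KMS: "0 < lam \<Longrightarrow> is_KMS lam (ln (1 / lam)) psi"
  unfolding is_KMS_def using psi_state psi_KMS_eq by (auto simp: Qalg_def)


section \<open>Uniqueness\<close>

lemma D_iff:
  assumes "0 < lam"
  shows "gact lam (ginv lam g) t \<in> {0..<1} \<longleftrightarrow> snd g \<le> t \<and> t < lam powi fst g + snd g"
proof -
  have p: "0 < lam powi fst g" using assms by simp
  show ?thesis unfolding gact_ginv_expr[OF assms] using p
    by (auto simp: field_simps)
qed

lemma Qalg_gen:
  assumes "0 < lam" "g \<in> Gcarrier lam" "c \<in> Gam lam" "d \<in> Gam lam"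
    and "c < d \<Longrightarrow> 0 \<le> c \<and> d \<le> 1 \<and> snd g \<le> c \<and> d \<le> lam powi fst g + snd g"
  shows "Qalg lam (mk (indicator {c..<d}) g)"
proof (rule Qalg_mk)
  show "lam \<noteq> 0" using assms by simp
  show "stepfun lam (indicator {c..<d})" using stepfun_ind[OF assms(3,4)] by simp
  fix t assume "(indicator {c..<d} t :: complex) \<noteq> 0"
  then have t: "c \<le> t" "t < d" by (auto simp: indicator_def split: if_splits)
  then have "c < d" by simp
  then show "t \<in> {0..<1} \<and> gact lam (ginv lam g) t \<in> {0..<1}"
    using assms(5) t D_iff[OF assms(1)] by auto
qed (use assms in auto)

lemma ind_gi:
  assumes "0 < lam"
  shows "(indicator {gact lam (ginv lam g) c..<gact lam (ginv lam g) d} (gact lam (ginv lam g) t) :: complex) = indicator {c..<d} t"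
  using assms by (simp add: indicator_def)

lemma ind_g:
  assumes "0 < lam"
  shows "(indicator {c..<d} (gact lam g t) :: complex) = indicator {gact lam (ginv lam g) c..<gact lam (ginv lam g) d} t"
  using ind_gi[OF assms, of g c d "gact lam g t"] assms by simp

lemma nat_floor_ex:
  assumes "0 \<le> (x::real)"
  obtains m :: nat where "real m \<le> x" "x < real m + 1"
proof -
  have "real (nat \<lfloor>x\<rfloor>) = of_int \<lfloor>x\<rfloor>" using assms by simp
  then show ?thesis using floor_correct[of x] that[of "nat \<lfloor>x\<rfloor>"] by simp
qed

locale kms =
  fixes lam :: real and \<beta> :: real and \<phi> :: "elem \<Rightarrow> complex"
  assumes lam0: "0 < lam" and lam1: "lam < 1" and KMS: "is_KMS lam \<beta> \<phi>"
begin

lemma l0: "lam \<noteq> 0" using lam0 by simp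

lemma st: "is_state lam \<phi>" using KMS unfolding is_KMS_def by simp

lemma phi_add: "Qalg lam x \<Longrightarrow> Qalg lam y \<Longrightarrow> \<phi> (addE x y) = \<phi> x + \<phi> y"
  using st unfolding is_state_def by blast

lemma phi_scale: "Qalg lam x \<Longrightarrow> \<phi> (scaleE c x) = c * \<phi> x"
  using st unfolding is_state_def by blast

lemma phi_zero: "\<phi> zeroE = 0"
proof -
  have "scaleE 0 zeroE = zeroE" unfolding scaleE_def zeroE_def by simp
  then show ?thesis using phi_scale[OF Qalg_zero[OF l0], of 0] by simp
qed

lemma phi_eproj: "\<phi> eproj = 1"
  using st unfolding is_state_def by blast

definition Phi :: "grp \<Rightarrow> real \<Rightarrow> real \<Rightarrow> complex" where
  "Phi g c d = \<phi> (mk (indicator {c..<d}) g)"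

lemma Phi_empty: "d \<le> c \<Longrightarrow> Phi g c d = 0"
proof -
  assume "d \<le> c"
  then have "indicator {c..<d} = (\<lambda>_::real. 0::complex)" by (auto simp: fun_eq_iff)
  then show ?thesis unfolding Phi_def by (simp add: mk_zero phi_zero)
qed

definition okI :: "grp \<Rightarrow> real \<Rightarrow> real \<Rightarrow> bool" where
  "okI g c d \<longleftrightarrow> g \<in> Gcarrier lam \<and> c \<in> Gam lam \<and> d \<in> Gam lam \<and>
     (c < d \<longrightarrow> 0 \<le> c \<and> d \<le> 1 \<and> snd g \<le> c \<and> d \<le> lam powi fst g + snd g)"

lemma okI_Qalg: "okI g c d \<Longrightarrow> Qalg lam (mk (indicator {c..<d}) g)"
  unfolding okI_def by (intro Qalg_gen lam0) auto

lemma Phi_scale: "okI g c d \<Longrightarrow> \<phi> (mk (\<lambda>t. e * indicator {c..<d} t) g) = e * Phi g c d"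
  unfolding Phi_def using phi_scale[OF okI_Qalg, of g c d e] by (simp add: scaleE_mk)

lemma Phi_split:
  assumes "okI g c d" "m \<in> Gam lam" "c \<le> m" "m \<le> d"
  shows "Phi g c d = Phi g c m + Phi g m d"
proof -
  have o1: "okI g c m" and o2: "okI g m d" using assms unfolding okI_def by auto
  have "indicator {c..<d} = (\<lambda>t. indicator {c..<m} t + (indicator {m..<d} t :: complex))"
    using assms(3,4) by (auto simp: fun_eq_iff indicator_def)
  then have "mk (indicator {c..<d}) g = addE (mk (indicator {c..<m}) g) (mk (indicator {m..<d}) g)"
    by (simp add: addE_mk)
  then show ?thesis unfolding Phi_def using phi_add[OF okI_Qalg[OF o1] okI_Qalg[OF o2]] by simp
qed

definition ex :: "int \<Rightarrow> complex" where
  "ex n = exp (\<i> * of_int n * (\<i> * of_real \<beta>))"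

lemma ex_real: "ex n = of_real (exp (- (of_int n * \<beta>)))"
proof -
  have "\<i> * of_int n * (\<i> * of_real \<beta>) = complex_of_real (- (of_int n * \<beta>))"
    by (simp add: algebra_simps)
  then show ?thesis unfolding ex_def by (simp only: exp_of_real)
qed

lemma KMS_mk:
  assumes "Qalg lam (mk f g)" "Qalg lam (mk f' h)" "Qalg lam (mk (\<lambda>t. f t * alpha lam g f' t) (gmul lam g h))"
  shows "ex (fst h) * \<phi> (mk (\<lambda>t. f t * alpha lam g f' t) (gmul lam g h)) = \<phi> (mk (\<lambda>t. f' t * alpha lam h f t) (gmul lam h g))"
proof -
  let ?z = "\<i> * complex_of_real \<beta>"
  have ge: "gauge_ext ?z (mk f' h) = scaleE (ex (fst h)) (mk f' h)"
    unfolding gauge_ext_mk scaleE_mk ex_def ..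
  have "\<phi> (conv lam (mk f g) (gauge_ext ?z (mk f' h))) = \<phi> (conv lam (mk f' h) (mk f g))"
    using KMS assms(1,2) ge Qalg_scaleE[OF l0 assms(2)] unfolding is_KMS_def by metis
  moreover have "conv lam (mk f g) (gauge_ext ?z (mk f' h)) = scaleE (ex (fst h)) (mk (\<lambda>t. f t * alpha lam g f' t) (gmul lam g h))"
    unfolding ge scaleE_mk conv_mk[OF l0] by (simp add: alpha_def mult.left_commute)
  ultimately show ?thesis
    using phi_scale[OF assms(3)] by (simp add: conv_mk[OF l0])
qed

lemma okI_ginv:
  assumes "okI g c d"
  shows "okI (ginv lam g) (gact lam (ginv lam g) c) (gact lam (ginv lam g) d)"
proof -
  have g: "g \<in> Gcarrier lam" and cd: "c \<in> Gam lam" "d \<in> Gam lam" using assms unfolding okI_def by auto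
  define p where "p = lam powi fst g"
  have p: "0 < p" unfolding p_def using lam0 by simp
  have e: "gact lam (ginv lam g) t = (t - snd g) / p" for t unfolding p_def by (rule gact_ginv_expr[OF lam0])
  have sg: "snd (ginv lam g) = - snd g / p" "lam powi fst (ginv lam g) = 1 / p"
    unfolding p_def ginv_def by (simp_all add: power_int_minus divide_inverse)
  have "c < d \<Longrightarrow> 0 \<le> c \<and> d \<le> 1 \<and> snd g \<le> c \<and> d \<le> p + snd g"
    using assms unfolding okI_def p_def by auto
  then have "gact lam (ginv lam g) c < gact lam (ginv lam g) d \<longrightarrow>
     0 \<le> gact lam (ginv lam g) c \<and> gact lam (ginv lam g) d \<le> 1 \<and>
     snd (ginv lam g) \<le> gact lam (ginv lam g) c \<and> gact lam (ginv lam g) d \<le> lam powi fst (ginv lam g) + snd (ginv lam g)"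
    unfolding e sg using p by (auto simp: field_simps)
  then show ?thesis unfolding okI_def
    using ginv_Gcarrier[OF l0 g] gact_Gam[OF l0 ginv_Gcarrier[OF l0 g]] cd by blast
qed

lemma rel_e:
  assumes "okI g c d"
  shows "ex (- fst g) * Phi gunit c d = Phi gunit (gact lam (ginv lam g) c) (gact lam (ginv lam g) d)"
proof -
  let ?c' = "gact lam (ginv lam g) c" and ?d' = "gact lam (ginv lam g) d"
  have o1: "okI gunit c d" using assms unfolding okI_def by (auto simp: gunit_def Gcarrier_def Gam_0)
  have f1: "(\<lambda>t. indicator {c..<d} t * alpha lam g (indicator {?c'..<?d'}) t) = (indicator {c..<d} :: real \<Rightarrow> complex)"
    unfolding alpha_def ind_gi[OF lam0] by (auto simp: fun_eq_iff indicator_def)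
  have f2: "(\<lambda>t. indicator {?c'..<?d'} t * alpha lam (ginv lam g) (indicator {c..<d}) t) = (indicator {?c'..<?d'} :: real \<Rightarrow> complex)"
    unfolding alpha_def ginv_ginv[OF l0] ind_g[OF lam0] by (auto simp: fun_eq_iff indicator_def)
  have "ex (fst (ginv lam g)) * \<phi> (mk (\<lambda>t. indicator {c..<d} t * alpha lam g (indicator {?c'..<?d'}) t) (gmul lam g (ginv lam g)))
      = \<phi> (mk (\<lambda>t. indicator {?c'..<?d'} t * alpha lam (ginv lam g) (indicator {c..<d}) t) (gmul lam (ginv lam g) g))"
    using okI_Qalg[OF assms] okI_Qalg[OF okI_ginv[OF assms]] okI_Qalg[OF o1]
    by (intro KMS_mk) (simp_all add: f1 l0)
  then show ?thesis unfolding f1 f2 Phi_def using l0 by simp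
qed

lemma Phi_pos:
  assumes "okI gunit c d"
  shows "Im (Phi gunit c d) = 0 \<and> 0 \<le> Re (Phi gunit c d)"
proof -
  let ?x = "mk (indicator {c..<d}) gunit"
  have cj: "(\<lambda>t. cnj (indicator {c..<d} t :: complex)) = indicator {c..<d}"
    by (auto simp: fun_eq_iff indicator_def)
  have "conv lam (star lam ?x) ?x = ?x"
    unfolding star_mk[OF l0] conv_mk[OF l0] cj by (simp add: alpha_def fun_eq_iff indicator_def mk_def)
  then show ?thesis using st okI_Qalg[OF assms] unfolding is_state_def Phi_def by metis
qed

definition mu :: "real \<Rightarrow> real \<Rightarrow> real" where "mu c d = Re (Phi gunit c d)"

lemma okI_unit: "c \<in> Gam lam \<Longrightarrow> d \<in> Gam lam \<Longrightarrow> (c < d \<Longrightarrow> 0 \<le> c \<and> d \<le> 1) \<Longrightarrow> okI gunit c d"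
  unfolding okI_def by (auto simp: gunit_def Gcarrier_def Gam_0)

lemma Phi_mu: "okI gunit c d \<Longrightarrow> Phi gunit c d = of_real (mu c d)"
  unfolding mu_def using Phi_pos by (simp add: complex_eq_iff)

lemma mu_nonneg: "okI gunit c d \<Longrightarrow> 0 \<le> mu c d"
  unfolding mu_def using Phi_pos by simp

lemma mu_empty: "d \<le> c \<Longrightarrow> mu c d = 0"
  unfolding mu_def using Phi_empty by simp

lemma mu_split: "okI gunit c d \<Longrightarrow> m \<in> Gam lam \<Longrightarrow> c \<le> m \<Longrightarrow> m \<le> d \<Longrightarrow> mu c d = mu c m + mu m d"
  unfolding mu_def using Phi_split by simp

lemma gi_trans: "gact lam (ginv lam (0, a)) t = t - a"
  using gact_ginv_expr[OF lam0, of "(0,a)" t] by simp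

lemma mu_tr:
  assumes "a \<in> Gam lam" "c \<in> Gam lam" "d \<in> Gam lam" "c < d" "0 \<le> c" "d \<le> 1" "0 \<le> c + a" "d + a \<le> 1"
  shows "mu (c + a) (d + a) = mu c d"
proof -
  have ok: "okI (0, a) (c + a) (d + a)"
    unfolding okI_def Gcarrier_def using assms by (auto intro: Gam_add)
  have "ex (- fst (0::int, a)) * Phi gunit (c + a) (d + a) = Phi gunit c d"
    using rel_e[OF ok] unfolding gi_trans by simp
  then show ?thesis unfolding mu_def ex_def by simp
qed

lemma scale_rel: "exp (real k * \<beta>) * mu 0 (lam ^ k) = 1"
proof -
  have g: "(int k, 0) \<in> Gcarrier lam" unfolding Gcarrier_def by (simp add: Gam_0)
  have lk: "lam ^ k \<le> 1" "0 < lam ^ k" using lam0 lam1 by (simp_all add: power_le_one)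
  have pk: "lam powi (int k) = lam ^ k" by simp
  have ok: "okI (int k, 0) 0 (lam ^ k)"
    unfolding okI_def using g lk Gam_powi[OF l0, of "int k"] by (simp add: Gam_0)
  have gi: "gact lam (ginv lam (int k, 0)) t = t / lam ^ k" for t
    using gact_ginv_expr[OF lam0, of "(int k, 0)" t] by simp
  have "ex (- int k) * Phi gunit 0 (lam ^ k) = Phi gunit 0 1"
    using rel_e[OF ok] unfolding gi using lk l0 by simp
  also have "Phi gunit 0 1 = 1" unfolding Phi_def eproj_mk[symmetric] by (rule phi_eproj)
  finally have "ex (- int k) * Phi gunit 0 (lam ^ k) = 1" .
  moreover have "ex (- int k) = of_real (exp (real k * \<beta>))" unfolding ex_real by simp
  moreover have "okI gunit 0 (lam ^ k)" using lk Gam_powi[OF l0, of "int k"] by (intro okI_unit) (simp_all add: Gam_0)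
  ultimately show ?thesis using Phi_mu by (metis of_real_1 of_real_eq_iff of_real_mult)
qed

lemma mu_rep:
  assumes "c \<in> Gam lam" "0 \<le> c" "c + real m * lam ^ k \<le> 1"
  shows "mu c (c + real m * lam ^ k) = real m * mu 0 (lam ^ k)"
  using assms(3)
proof (induction m)
  case 0 then show ?case by (simp add: mu_empty)
next
  case (Suc m)
  let ?u = "lam ^ k"
  have u: "0 < ?u" "?u \<le> 1" using lam0 lam1 by (simp_all add: power_le_one)
  have uG: "?u \<in> Gam lam" using Gam_powi[OF l0, of "int k"] by simp
  have eG: "c + real m * ?u \<in> Gam lam" using assms(1) uG by (intro Gam_add Gam_mult_nat)
  have e1G: "c + real (Suc m) * ?u \<in> Gam lam" using assms(1) uG by (intro Gam_add Gam_mult_nat)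
  have le: "c + real m * ?u \<le> 1" using Suc.prems u by (simp add: algebra_simps)
  have ok: "okI gunit c (c + real (Suc m) * ?u)" using assms e1G Suc.prems by (intro okI_unit) auto
  have "mu c (c + real (Suc m) * ?u) = mu c (c + real m * ?u) + mu (c + real m * ?u) (c + real (Suc m) * ?u)"
    using u by (intro mu_split[OF ok eG]) (auto simp: algebra_simps)
  also have "mu (c + real m * ?u) (c + real (Suc m) * ?u) = mu (0 + (c + real m * ?u)) (?u + (c + real m * ?u))"
    by (simp add: algebra_simps)
  also have "\<dots> = mu 0 ?u"
    using u eG uG Suc.prems assms(2) by (intro mu_tr) (auto simp: Gam_0 algebra_simps)
  finally show ?case using Suc.IH[OF le] by (simp add: algebra_simps)
qed

lemma mu_bounds:
  assumes "c \<in> Gam lam" "d \<in> Gam lam" "0 \<le> c" "c \<le> d" "d \<le> 1"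
  obtains m :: nat where "real m * mu 0 (lam ^ k) \<le> mu c d" "mu c d \<le> (real m + 1) * mu 0 (lam ^ k)"
    "real m * lam ^ k \<le> d - c" "d - c < (real m + 1) * lam ^ k"
proof -
  let ?u = "lam ^ k"
  have u: "0 < ?u" "?u \<le> 1" using lam0 lam1 by (simp_all add: power_le_one)
  have uG: "?u \<in> Gam lam" using Gam_powi[OF l0, of "int k"] by simp
  obtain m :: nat where m: "real m \<le> (d - c) / ?u" "(d - c) / ?u < real m + 1"
    using nat_floor_ex[of "(d - c) / ?u"] assms u by auto
  have m1: "real m * ?u \<le> d - c" using m(1) u by (simp add: field_simps)
  have m2: "d - c < (real m + 1) * ?u" using m(2) u by (simp add: field_simps)
  define e where "e = c + real m * ?u"
  have eG: "e \<in> Gam lam" unfolding e_def using assms(1) uG by (intro Gam_add Gam_mult_nat)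
  have ed: "e \<le> d" "d - e < ?u" using m1 m2 unfolding e_def by (simp_all add: algebra_simps)
  have ok: "okI gunit c d" using assms by (intro okI_unit) auto
  have "mu c d = mu c e + mu e d" using assms ed u by (intro mu_split[OF ok eG]) (auto simp: e_def)
  also have "mu c e = real m * mu 0 ?u" unfolding e_def using assms ed by (intro mu_rep) (auto simp: e_def)
  finally have split: "mu c d = real m * mu 0 ?u + mu e d" .
  have deG: "d - e \<in> Gam lam" using assms(2) eG by (rule Gam_diff)
  have nn: "0 \<le> mu e d" using assms eG ed by (intro mu_nonneg okI_unit) (auto simp: e_def)
  have up: "mu e d \<le> mu 0 ?u"
  proof (cases "e < d")
    case True
    have "mu e d = mu (0 + e) ((d - e) + e)" by simp
    also have "\<dots> = mu 0 (d - e)"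
      using True assms eG deG ed u by (intro mu_tr) (auto simp: Gam_0 e_def)
    also have "mu 0 ?u = mu 0 (d - e) + mu (d - e) ?u"
    proof (rule mu_split)
      show "okI gunit 0 ?u" using u uG by (intro okI_unit) (auto simp: Gam_0)
    qed (use ed deG in auto)
    moreover have "0 \<le> mu (d - e) ?u"
      using u uG deG ed by (intro mu_nonneg okI_unit) auto
    ultimately show ?thesis by simp
  next
    case False
    then have "mu e d = 0" by (intro mu_empty) simp
    moreover have "0 \<le> mu 0 ?u" using u uG by (intro mu_nonneg okI_unit) (auto simp: Gam_0)
    ultimately show ?thesis by simp
  qed
  show ?thesis
    by (rule that[of m]) (use split nn up m1 m2 in \<open>simp_all add: algebra_simps\<close>)
qed

lemma mu01: "mu 0 1 = 1"
proof -
  have "Phi gunit 0 1 = 1" unfolding Phi_def eproj_mk[symmetric] by (rule phi_eproj)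
  then show ?thesis unfolding mu_def by simp
qed

lemma beta_eq: "\<beta> = ln (1 / lam)"
proof -
  define E where "E = exp \<beta>"
  define q where "q = E * lam"
  have E0: "0 < E" unfolding E_def by simp
  have q0: "0 < q" unfolding q_def using E0 lam0 by simp
  have bnd: "1 - lam ^ k < q ^ k \<and> q ^ k \<le> 1 + lam ^ k" for k :: nat
  proof -
    let ?u = "lam ^ k" and ?\<nu> = "mu 0 (lam ^ k)"
    have u: "0 < ?u" using lam0 by simp
    have sr: "E ^ k * ?\<nu> = 1" using scale_rel[of k] unfolding E_def exp_of_nat_mult by simp
    have Ek: "0 < E ^ k" using E0 by simp
    obtain m :: nat where m: "real m * ?\<nu> \<le> mu 0 1" "mu 0 1 \<le> (real m + 1) * ?\<nu>"
      "real m * ?u \<le> 1 - 0" "1 - 0 < (real m + 1) * ?u"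
      using mu_bounds[of 0 1 k] by (auto simp: Gam_0 Gam_1)
    have m1: "real m \<le> E ^ k"
    proof -
      have "real m * (E ^ k * ?\<nu>) \<le> E ^ k" using m(1) mu01 Ek
        by (metis mult.left_commute mult_le_cancel_left_pos mult.right_neutral)
      then show ?thesis using sr by simp
    qed
    have m2: "E ^ k \<le> real m + 1"
    proof -
      have "E ^ k \<le> (real m + 1) * (E ^ k * ?\<nu>)" using m(2) mu01 Ek
        by (metis mult.left_commute mult_le_cancel_left_pos mult.right_neutral)
      then show ?thesis using sr by simp
    qed
    have qk: "q ^ k = E ^ k * ?u" unfolding q_def by (simp add: power_mult_distrib)
    have "1 - ?u < real m * ?u" using m(4) by (simp add: algebra_simps)
    also have "\<dots> \<le> E ^ k * ?u" using m1 u by (simp add: mult_right_mono)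
    finally have A: "1 - ?u < q ^ k" using qk by simp
    have "E ^ k * ?u \<le> (real m + 1) * ?u" using m2 u by (simp add: mult_right_mono)
    also have "\<dots> \<le> 1 + ?u" using m(3) by (simp add: algebra_simps)
    finally have B: "q ^ k \<le> 1 + ?u" using qk by simp
    show ?thesis using A B by simp
  qed
  have q1: "q = 1"
  proof (rule ccontr)
    assume "q \<noteq> 1"
    then consider "1 < q" | "q < 1" by linarith
    then show False
    proof cases
      case 1
      obtain n where "2 < q ^ n" using real_arch_pow[OF 1] by blast
      moreover have "lam ^ n \<le> 1" using lam0 lam1 by (simp add: power_le_one)
      ultimately show False using bnd[of n] by simp
    next
      case 2
      define s where "s = max q lam"
      have s1: "s < 1" unfolding s_def using 2 lam1 by simp
      obtain n where n: "s ^ n < 1 / 2" using real_arch_pow_inv[OF _ s1, of "1/2"] by auto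
      have "q ^ n \<le> s ^ n" unfolding s_def using q0 by (intro power_mono) auto
      moreover have "lam ^ n \<le> s ^ n" unfolding s_def using lam0 by (intro power_mono) auto
      ultimately show False using bnd[of n] n by simp
    qed
  qed
  then have "E = 1 / lam" unfolding q_def using lam0 by (simp add: field_simps)
  then show ?thesis unfolding E_def by (metis ln_exp)
qed

lemma mu_eq:
  assumes "c \<in> Gam lam" "d \<in> Gam lam" "0 \<le> c" "c \<le> d" "d \<le> 1"
  shows "mu c d = d - c"
proof (rule ccontr)
  assume ne: "mu c d \<noteq> d - c"
  have nu: "mu 0 (lam ^ k) = lam ^ k" for k
  proof -
    have "exp (real k * \<beta>) = (1 / lam) ^ k"
      unfolding beta_eq exp_of_nat_mult using lam0 by simp
    then have "(1 / lam) ^ k * mu 0 (lam ^ k) = 1" using scale_rel[of k] by simp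
    then show ?thesis using lam0 by (simp add: field_simps power_one_over)
  qed
  have "\<bar>mu c d - (d - c)\<bar> \<le> lam ^ k" for k
  proof -
    obtain m :: nat where m: "real m * mu 0 (lam ^ k) \<le> mu c d" "mu c d \<le> (real m + 1) * mu 0 (lam ^ k)"
      "real m * lam ^ k \<le> d - c" "d - c < (real m + 1) * lam ^ k"
      using mu_bounds[OF assms] by blast
    then show ?thesis unfolding nu by (simp add: algebra_simps abs_le_iff)
  qed
  moreover obtain n where "lam ^ n < \<bar>mu c d - (d - c)\<bar>"
    using real_arch_pow_inv[OF _ lam1, of "\<bar>mu c d - (d - c)\<bar>"] ne by auto
  ultimately show False by (meson not_le)
qed

lemma KMS_K:
  assumes "okI g c d" "okI gunit k1 k2" "okI g c1 d1"
    and e1: "\<And>t. (indicator {k1..<k2} t :: complex) * indicator {c..<d} t = indicator {c1..<d1} t"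
    and e2: "\<And>t. (indicator {c..<d} t :: complex) * indicator {k1..<k2} (gact lam (ginv lam g) t) = indicator {c2..<d2} t"
  shows "ex (fst g) * Phi g c1 d1 = Phi g c2 d2"
proof -
  have f1: "(\<lambda>t. indicator {k1..<k2} t * alpha lam gunit (indicator {c..<d}) t) = (indicator {c1..<d1} :: real \<Rightarrow> complex)"
    using e1 by (simp add: alpha_def fun_eq_iff)
  have f2: "(\<lambda>t. indicator {c..<d} t * alpha lam g (indicator {k1..<k2}) t) = (indicator {c2..<d2} :: real \<Rightarrow> complex)"
    using e2 by (simp add: alpha_def fun_eq_iff)
  have "ex (fst g) * \<phi> (mk (\<lambda>t. indicator {k1..<k2} t * alpha lam gunit (indicator {c..<d}) t) (gmul lam gunit g))
     = \<phi> (mk (\<lambda>t. indicator {c..<d} t * alpha lam g (indicator {k1..<k2}) t) (gmul lam g gunit))"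
    using okI_Qalg[OF assms(2)] okI_Qalg[OF assms(1)] okI_Qalg[OF assms(3)]
    by (intro KMS_mk) (simp_all add: f1)
  then show ?thesis unfolding f1 f2 Phi_def by simp
qed

lemma beta_pos: "0 < \<beta>"
  unfolding beta_eq using lam0 lam1 by simp

lemma offdiag_n:
  assumes ok: "okI g c d" and n: "fst g \<noteq> 0"
  shows "Phi g c d = 0"
proof (cases "c < d")
  case False then show ?thesis by (intro Phi_empty) simp
next
  case True
  have g: "g \<in> Gcarrier lam" and cd: "c \<in> Gam lam" "d \<in> Gam lam"
    and b: "0 \<le> c" "d \<le> 1" "snd g \<le> c" "d \<le> lam powi fst g + snd g"
    using ok True unfolding okI_def by auto
  let ?gi = "gact lam (ginv lam g)"
  define k1 where "k1 = min c (?gi c)"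
  define k2 where "k2 = max d (?gi d)"
  have p: "0 < lam powi fst g" using lam0 by simp
  have e: "?gi t = (t - snd g) / lam powi fst g" for t by (rule gact_ginv_expr[OF lam0])
  have gic: "0 \<le> ?gi c" "?gi d \<le> 1" unfolding e using b p by (simp_all add: field_simps)
  have G: "?gi c \<in> Gam lam" "?gi d \<in> Gam lam" using gact_Gam[OF l0 ginv_Gcarrier[OF l0 g]] cd by auto
  have okK: "okI gunit k1 k2"
    unfolding k1_def k2_def using G cd gic b by (intro okI_unit) (auto simp: min_def max_def)
  have "ex (fst g) * Phi g c d = Phi g c d"
  proof (rule KMS_K[OF ok okK ok])
    fix t
    show "(indicator {k1..<k2} t :: complex) * indicator {c..<d} t = indicator {c..<d} t"
      unfolding k1_def k2_def by (auto simp: indicator_def)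
    have m1: "c \<le> t \<Longrightarrow> ?gi c \<le> ?gi t" and m2: "t < d \<Longrightarrow> ?gi t < ?gi d" using lam0 by simp_all
    show "(indicator {c..<d} t :: complex) * indicator {k1..<k2} (?gi t) = indicator {c..<d} t"
      unfolding k1_def k2_def using m1 m2 by (auto simp: indicator_def min_le_iff_disj less_max_iff_disj)
  qed
  moreover have "ex (fst g) \<noteq> 1"
  proof -
    have "of_int (fst g) * \<beta> \<noteq> 0" using n beta_pos by simp
    then have "exp (- (of_int (fst g) * \<beta>)) \<noteq> 1" by simp
    then show ?thesis unfolding ex_real by simp
  qed
  ultimately show ?thesis by (metis mult_cancel_right1)
qed

lemma offdiag_tr:
  assumes ok: "okI (0, a) c d" and a: "a \<noteq> 0"
  shows "Phi (0, a) c d = 0"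
proof -
  let ?g = "(0::int, a)"
  have aG: "a \<in> Gam lam" and cd: "c \<in> Gam lam" "d \<in> Gam lam" and b: "c < d \<Longrightarrow> 0 \<le> c \<and> d \<le> 1 \<and> a \<le> c \<and> d \<le> 1 + a"
    using ok unfolding okI_def Gcarrier_def by auto
  have ex0: "ex 0 = 1" unfolding ex_def by simp
  show ?thesis
  proof (cases "c < d")
    case False then show ?thesis by (intro Phi_empty) simp
  next
    case True
    note bb = b[OF True]
    show ?thesis
    proof (cases "0 < a")
      case pos: True
      have step: "Phi ?g c' d = Phi ?g (c' + a) d" if c': "c' \<in> Gam lam" "c \<le> c'" for c'
      proof (cases "c' < d")
        case False then show ?thesis using pos by (simp add: Phi_empty)
      next
        case True
        have okK: "okI gunit c' d" using c' cd bb by (intro okI_unit) auto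
        have ok1: "okI ?g c' d" using ok c' unfolding okI_def by auto
        have "ex (fst ?g) * Phi ?g c' d = Phi ?g (c' + a) d"
        proof (rule KMS_K[OF ok okK ok1])
          fix t
          show "(indicator {c'..<d} t :: complex) * indicator {c..<d} t = indicator {c'..<d} t"
            using c' by (auto simp: indicator_def)
          show "(indicator {c..<d} t :: complex) * indicator {c'..<d} (gact lam (ginv lam ?g) t) = indicator {c' + a..<d} t"
            unfolding gi_trans using c' pos by (auto simp: indicator_def)
        qed
        then show ?thesis using ex0 by simp
      qed
      have iter: "Phi ?g (c + real j * a) d = Phi ?g c d" for j :: nat
      proof (induction j)
        case 0 then show ?case by simp
        case (Suc j)
        have "Phi ?g (c + real j * a) d = Phi ?g (c + real j * a + a) d"
          using pos cd aG by (intro step) (auto intro: Gam_add Gam_mult_nat)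
        then show ?case using Suc.IH by (simp add: algebra_simps)
      qed
      obtain j :: nat where "(d - c) / a < real j" using reals_Archimedean2 by blast
      then have "d \<le> c + real j * a" using pos by (simp add: field_simps)
      then show ?thesis using iter[of j] Phi_empty by simp
    next
      case neg: False
      then have neg: "a < 0" using a by simp
      have step: "Phi ?g c d' = Phi ?g c (d' + a)" if d': "d' \<in> Gam lam" "d' \<le> d" for d'
      proof (cases "c < d'")
        case False then show ?thesis using neg by (simp add: Phi_empty)
      next
        case True
        have okK: "okI gunit c d'" using d' cd bb by (intro okI_unit) auto
        have ok1: "okI ?g c d'" using ok d' unfolding okI_def by auto
        have "ex (fst ?g) * Phi ?g c d' = Phi ?g c (d' + a)"
        proof (rule KMS_K[OF ok okK ok1])
          fix t
          show "(indicator {c..<d'} t :: complex) * indicator {c..<d} t = indicator {c..<d'} t"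
            using d' by (auto simp: indicator_def)
          show "(indicator {c..<d} t :: complex) * indicator {c..<d'} (gact lam (ginv lam ?g) t) = indicator {c..<d' + a} t"
            unfolding gi_trans using d' neg by (auto simp: indicator_def)
        qed
        then show ?thesis using ex0 by simp
      qed
      have iter: "Phi ?g c (d + real j * a) = Phi ?g c d" for j :: nat
      proof (induction j)
        case 0 then show ?case by simp
        case (Suc j)
        have "Phi ?g c (d + real j * a) = Phi ?g c (d + real j * a + a)"
          using neg cd aG by (intro step) (auto intro: Gam_add Gam_mult_nat simp: mult_nonneg_nonpos)
        then show ?case using Suc.IH by (simp add: algebra_simps)
      qed
      obtain j :: nat where "(d - c) / (- a) < real j" using reals_Archimedean2 by blast
      then have "d + real j * a \<le> c" using neg by (simp add: field_simps)
      then show ?thesis using iter[of j] Phi_empty by simp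
    qed
  qed
qed

lemma offdiag:
  assumes "okI g c d" "g \<noteq> gunit"
  shows "Phi g c d = 0"
proof (cases "fst g = 0")
  case False then show ?thesis using offdiag_n assms by blast
next
  case True
  then obtain a where g: "g = (0, a)" by (cases g) auto
  then have "a \<noteq> 0" using assms(2) unfolding gunit_def by auto
  then show ?thesis using offdiag_tr assms g by blast
qed

end


lemma state_zero: "is_state lam L \<Longrightarrow> lam \<noteq> 0 \<Longrightarrow> L zeroE = 0"
proof -
  assume st: "is_state lam L" and l: "lam \<noteq> 0"
  have "scaleE 0 zeroE = zeroE" unfolding scaleE_def zeroE_def by simp
  moreover have "L (scaleE 0 zeroE) = 0 * L zeroE"
    using st Qalg_zero[OF l] unfolding is_state_def by blast
  ultimately show ?thesis by simp
qed

lemma sum_state: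
  assumes st: "is_state lam L" and l: "lam \<noteq> 0" and fin: "finite I" and Q: "\<And>i. i \<in> I \<Longrightarrow> Qalg lam (B i)"
  shows "Qalg lam (\<lambda>g t. \<Sum>i\<in>I. B i g t) \<and> L (\<lambda>g t. \<Sum>i\<in>I. B i g t) = (\<Sum>i\<in>I. L (B i))"
  using fin Q
proof (induction I rule: finite_induct)
  case empty
  have "(\<lambda>g t. \<Sum>i\<in>{}. B i g t) = zeroE" unfolding zeroE_def by simp
  then show ?case using Qalg_zero[OF l] state_zero[OF st l] by simp
next
  case (insert j I)
  have e: "(\<lambda>g t. \<Sum>i\<in>insert j I. B i g t) = addE (B j) (\<lambda>g t. \<Sum>i\<in>I. B i g t)"
    unfolding addE_def using insert.hyps by simp
  have IH: "Qalg lam (\<lambda>g t. \<Sum>i\<in>I. B i g t)" "L (\<lambda>g t. \<Sum>i\<in>I. B i g t) = (\<Sum>i\<in>I. L (B i))"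
    using insert by auto
  have Qj: "Qalg lam (B j)" using insert by simp
  have "L (addE (B j) (\<lambda>g t. \<Sum>i\<in>I. B i g t)) = L (B j) + L (\<lambda>g t. \<Sum>i\<in>I. B i g t)"
    using st Qj IH(1) unfolding is_state_def by blast
  then show ?case unfolding e using Qalg_addE[OF l Qj IH(1)] IH(2) insert.hyps by simp
qed

lemma Gam_max: "a \<in> Gam lam \<Longrightarrow> b \<in> Gam lam \<Longrightarrow> max a b \<in> Gam lam"
  by (simp add: max_def)
lemma Gam_min: "a \<in> Gam lam \<Longrightarrow> b \<in> Gam lam \<Longrightarrow> min a b \<in> Gam lam"
  by (simp add: min_def)

context kms
begin

lemma gen_eq:
  assumes "okI g c d"
  shows "\<phi> (mk (indicator {c..<d}) g) = psi (mk (indicator {c..<d}) g)"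
proof (cases "g = gunit")
  case False
  have "psi (mk (indicator {c..<d}) g) = 0" unfolding psi_def mk_gunit_at using False by simp
  then show ?thesis using offdiag[OF assms False] unfolding Phi_def by simp
next
  case True
  have ps: "psi (mk (indicator {c..<d}) g) = of_real (ilen c d)"
    unfolding psi_def mk_gunit_at using True ind_integral[of c d] by simp
  show ?thesis
  proof (cases "c < d")
    case False
    then show ?thesis using ps Phi_empty[of d c g] unfolding Phi_def by (simp add: ilen_def)
  next
    case cd: True
    have b: "0 \<le> c" "d \<le> 1" "c \<in> Gam lam" "d \<in> Gam lam" using assms cd unfolding okI_def by auto
    have "\<phi> (mk (indicator {c..<d}) g) = of_real (mu c d)"
      using Phi_mu assms True unfolding Phi_def by simp
    also have "mu c d = d - c" using b cd by (intro mu_eq) auto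
    finally show ?thesis using ps cd by (simp add: ilen_def)
  qed
qed

lemma phi_psi:
  assumes x: "Qalg lam x"
  shows "\<phi> x = psi x"
proof -
  have alx: "alg lam x" and Dx: "\<And>g t. x g t \<noteq> 0 \<Longrightarrow> t \<in> {0..<1} \<and> gact lam (ginv lam g) t \<in> {0..<1}"
    using x unfolding Qalg_iff[OF l0] by auto
  define F where "F = {g. x g \<noteq> (\<lambda>_. 0)}"
  have fF: "finite F" and FG: "F \<subseteq> Gcarrier lam" using alx unfolding alg_def F_def by auto
  have ex1: "\<forall>g. \<exists>S c. finite S \<and> S \<subseteq> {(a,b). a \<in> Gam lam \<and> b \<in> Gam lam \<and> a < b} \<and>
      x g = (\<lambda>t. \<Sum>p\<in>S. c p * indicator {fst p..<snd p} t)"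
    using alx unfolding alg_def stepfun_alt by blast
  then have "\<exists>SS. \<forall>g. \<exists>c. finite (SS g) \<and> SS g \<subseteq> {(a,b). a \<in> Gam lam \<and> b \<in> Gam lam \<and> a < b} \<and>
      x g = (\<lambda>t. \<Sum>p\<in>SS g. c p * indicator {fst p..<snd p} t)"
    by (rule choice)
  then obtain SS where SS0: "\<forall>g. \<exists>c. finite (SS g) \<and> SS g \<subseteq> {(a,b). a \<in> Gam lam \<and> b \<in> Gam lam \<and> a < b} \<and>
      x g = (\<lambda>t. \<Sum>p\<in>SS g. c p * indicator {fst p..<snd p} t)" by blast
  then have "\<exists>cc. \<forall>g. finite (SS g) \<and> SS g \<subseteq> {(a,b). a \<in> Gam lam \<and> b \<in> Gam lam \<and> a < b} \<and>
      x g = (\<lambda>t. \<Sum>p\<in>SS g. cc g p * indicator {fst p..<snd p} t)"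
    by (rule choice)
  then obtain cc where P: "\<forall>g. finite (SS g) \<and> SS g \<subseteq> {(a,b). a \<in> Gam lam \<and> b \<in> Gam lam \<and> a < b} \<and>
      x g = (\<lambda>t. \<Sum>p\<in>SS g. cc g p * indicator {fst p..<snd p} t)" by blast
  have SS: "\<And>g. finite (SS g)" "\<And>g. SS g \<subseteq> {(a,b). a \<in> Gam lam \<and> b \<in> Gam lam \<and> a < b}"
    using P by blast+
  have xg: "\<And>g. x g = (\<lambda>t. \<Sum>p\<in>SS g. cc g p * indicator {fst p..<snd p} t)"
    using P by blast
  define lo where "lo g = max 0 (snd g)" for g :: grp
  define hi where "hi g = min 1 (lam powi fst g + snd g)" for g :: grp
  define gen where "gen i = mk (indicator {max (fst (snd i)) (lo (fst i))..<min (snd (snd i)) (hi (fst i))}) (fst i)" for i :: "grp \<times> real \<times> real"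
  define B where "B i = scaleE (cc (fst i) (snd i)) (gen i)" for i :: "grp \<times> real \<times> real"
  define I where "I = Sigma F SS"
  have fI: "finite I" unfolding I_def using fF SS(1) by auto
  have okgen: "okI (fst i) (max (fst (snd i)) (lo (fst i))) (min (snd (snd i)) (hi (fst i)))" if "i \<in> I" for i
  proof -
    obtain g a b where i: "i = (g, a, b)" by (cases i) auto
    have gF: "g \<in> F" and ab: "(a, b) \<in> SS g" using that unfolding I_def i by auto
    have gG: "g \<in> Gcarrier lam" using gF FG by auto
    have abG: "a \<in> Gam lam" "b \<in> Gam lam" using ab SS(2)[of g] by auto
    have loG: "lo g \<in> Gam lam" unfolding lo_def using gG by (intro Gam_max) (auto simp: Gam_0 Gcarrier_def)
    have hiG: "hi g \<in> Gam lam" unfolding hi_def using gG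
      by (intro Gam_min Gam_add Gam_powi) (auto simp: Gam_1 Gcarrier_def l0)
    show ?thesis unfolding okI_def i using gG abG loG hiG
      by (auto simp: lo_def hi_def intro: Gam_max Gam_min)
  qed
  have QB: "Qalg lam (B i)" if "i \<in> I" for i
    unfolding B_def gen_def by (intro Qalg_scaleE[OF l0] okI_Qalg okgen that)
  have xsum: "x = (\<lambda>h t. \<Sum>i\<in>I. B i h t)"
  proof (intro ext)
    fix h t
    have "(\<Sum>i\<in>I. B i h t) = (\<Sum>g\<in>F. \<Sum>p\<in>SS g. B (g, p) h t)"
      unfolding I_def using fF SS(1) by (subst sum.Sigma) (auto simp: case_prod_beta')
    also have "\<dots> = (\<Sum>g\<in>F. if g = h then (\<Sum>p\<in>SS h. cc h p * (indicator {fst p..<snd p} t * indicator {lo h..<hi h} t)) else 0)"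
    proof (intro sum.cong refl)
      fix g assume "g \<in> F"
      show "(\<Sum>p\<in>SS g. B (g, p) h t) = (if g = h then (\<Sum>p\<in>SS h. cc h p * (indicator {fst p..<snd p} t * indicator {lo h..<hi h} t)) else 0)"
        unfolding B_def gen_def scaleE_def mk_def by (auto simp: indicator_def intro!: sum.cong)
    qed
    also have "\<dots> = (if h \<in> F then (\<Sum>p\<in>SS h. cc h p * (indicator {fst p..<snd p} t * indicator {lo h..<hi h} t)) else 0)"
      using fF by (simp add: sum.delta)
    also have "\<dots> = x h t"
    proof (cases "h \<in> F")
      case False
      then have "x h t = 0" unfolding F_def by simp
      then show ?thesis using False by simp
    next
      case True
      have "(\<Sum>p\<in>SS h. cc h p * (indicator {fst p..<snd p} t * indicator {lo h..<hi h} t)) = x h t * indicator {lo h..<hi h} t"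
        unfolding xg by (simp add: sum_distrib_right mult.assoc)
      also have "\<dots> = x h t"
      proof (cases "x h t = 0")
        case False
        then have "t \<in> {0..<1} \<and> gact lam (ginv lam h) t \<in> {0..<1}" by (rule Dx)
        then have "t \<in> {lo h..<hi h}" unfolding lo_def hi_def D_iff[OF lam0] by auto
        then show ?thesis by simp
      qed simp
      finally show ?thesis using True by simp
    qed
    finally show "x h t = (\<Sum>i\<in>I. B i h t)" by simp
  qed
  have "\<phi> x = (\<Sum>i\<in>I. \<phi> (B i))"
    using sum_state[OF st l0 fI QB] xsum by simp
  also have "\<dots> = (\<Sum>i\<in>I. psi (B i))"
  proof (intro sum.cong refl)
    fix i assume i: "i \<in> I"
    have "\<phi> (B i) = cc (fst i) (snd i) * \<phi> (gen i)"
      unfolding B_def using phi_scale okI_Qalg[OF okgen[OF i]] gen_def by simp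
    also have "\<phi> (gen i) = psi (gen i)" unfolding gen_def by (rule gen_eq[OF okgen[OF i]])
    finally show "\<phi> (B i) = psi (B i)" unfolding B_def psi_scale by simp
  qed
  also have "\<dots> = psi x"
    using sum_state[OF psi_state[OF lam0] l0 fI QB] xsum by simp
  finally show ?thesis .
qed

end

theorem mainTheorem17:
  fixes lam :: real
  assumes "0 < lam" and "lam < 1"
  shows "(\<forall>x. Qalg lam x \<longrightarrow>
            (\<forall>t::real. gauge_ext (of_real t) x = gauge (exp (\<i> * of_real t)) x)
          \<and> (\<forall>g s. (\<lambda>z. gauge_ext z x g s) holomorphic_on UNIV))
       \<and> is_KMS lam (ln (1 / lam)) psi
       \<and> (\<forall>\<beta> \<phi>. is_KMS lam \<beta> \<phi> \<longrightarrow> (\<forall>x. Qalg lam x \<longrightarrow> \<phi> x = psi x))"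
proof (intro conjI allI impI)
  fix x :: elem and t :: real
  show "gauge_ext (of_real t) x = gauge (exp (\<i> * of_real t)) x"
    unfolding gauge_ext_def gauge_def by (auto simp: fun_eq_iff exp_power_int mult_ac)
next
  fix x :: elem and g s
  show "(\<lambda>z. gauge_ext z x g s) holomorphic_on UNIV"
    unfolding gauge_ext_def by (intro holomorphic_intros)
next
  show "is_KMS lam (ln (1 / lam)) psi" using psi_KMS assms(1) .
next
  fix \<beta> \<phi> x
  assume "is_KMS lam \<beta> \<phi>" "Qalg lam x"
  then show "\<phi> x = psi x" using kms.phi_psi[of lam \<beta> \<phi> x] assms unfolding kms_def by blast
qed


end
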